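(* Let $\nu$ and $\nu'$ be centered distributions on $\mathbb{R}$ with $m_j(\nu)=m_j(\nu')$ for $j=1,\dots,\ell$. \begin{itemize} \item If $\nu$ and $\nu'$ are $\epsilon$-subgaussian with $\epsilon<1$, then $\chi^2(\nu*N(0,1)\,\|\,\nu'*N(0,1))\le O\Big(\frac{1}{\sqrt\ell}\frac{\epsilon^{2\ell+2}}{1-\epsilon^2}\Big)$. \item If $\nu$ and $\nu'$ are supported on $[-\epsilon,\epsilon]$ with $\epsilon<1$, then $\chi^2(\nu*N(0,1)\,\|\,\nu'*N(0,1))\le O\Big(\Big(\frac{e\epsilon^2}{\ell+1}\Big)^{\ell+1}\Big)$. \end{itemize}
   Context: $m_j(\pi)=\mathbb{E}_\pi X^j$. A distribution $\pi$ is $\epsilon$-subgaussian if $\mathbb{E}_\pi[e^{tX}]\le\exp(t^2\epsilon^2/2)$ for all $t\in\mathbb{R}$. $\chi^2(P\|Q)=\int (p-q)^2/q$ is the chi-squared divergence. $O(\cdot)$ hides an absolute constant. *)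

theory Defs
  imports "HOL-Probability.Probability"
begin

definition real_distribution :: "real measure \<Rightarrow> bool" where
  "real_distribution M \<longleftrightarrow> prob_space M \<and> sets M = sets borel"

definition moment :: "real measure \<Rightarrow> nat \<Rightarrow> real" where
  "moment M j = (\<integral>x. x ^ j \<partial>M)"

definition centered :: "real measure \<Rightarrow> bool" where
  "centered M \<longleftrightarrow> integrable M (\<lambda>x. x) \<and> (\<integral>x. x \<partial>M) = 0"

definition subgaussian :: "real measure \<Rightarrow> real \<Rightarrow> bool" where
  "subgaussian M \<epsilon> \<longleftrightarrow>
     (\<forall>t::real. integrable M (\<lambda>x. exp (t * x)) \<and>
        (\<integral>x. exp (t * x) \<partial>M) \<le> exp (t\<^sup>2 * \<epsilon>\<^sup>2 / 2))"

text \<open>Lebesgue density of the convolution pi * N(0,1).\<close>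
definition gauss_conv_density :: "real measure \<Rightarrow> real \<Rightarrow> real" where
  "gauss_conv_density M x = (\<integral>y. std_normal_density (x - y) \<partial>M)"

definition chi2 :: "(real \<Rightarrow> real) \<Rightarrow> (real \<Rightarrow> real) \<Rightarrow> ennreal" where
  "chi2 p q = (\<integral>\<^sup>+ x. ennreal ((p x - q x)\<^sup>2 / q x) \<partial>lborel)"

end

theory Submission
  imports Defs
begin

lemma exp_ge_e_mul: "exp 1 * y \<le> exp (y::real)"
proof -
  have "y \<le> exp (y - 1)" using exp_ge_add_one_self[of "y-1"] by simp
  then have "exp 1 * y \<le> exp 1 * exp (y - 1)" by simp
  also have "\<dots> = exp y" by (simp add: exp_diff)
  finally show ?thesis .
qed

lemma pow_le_exp:
  fixes x t :: real assumes "0 \<le> x" "0 < t"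
  shows "x ^ j \<le> (real j / (t * exp 1)) ^ j * exp (t * x)"
proof (cases "j = 0")
  case True then show ?thesis using assms by simp
next
  case False
  then have jp: "real j > 0" by simp
  have "exp 1 * (t * x / j) \<le> exp (t * x / j)" by (rule exp_ge_e_mul)
  moreover have "0 \<le> exp 1 * (t * x / j)" using assms jp by simp
  ultimately have "(exp 1 * (t * x / j)) ^ j \<le> exp (t * x / j) ^ j"
    by (rule power_mono)
  also have "exp (t * x / j) ^ j = exp (t * x)"
    using jp by (simp add: exp_of_nat_mult[symmetric])
  finally have *: "(exp 1 * (t * x / j)) ^ j \<le> exp (t * x)" .
  have h: "(real j / (t * exp 1)) * (exp 1 * (t * x / real j)) = x"
    using jp assms(2) by (simp add: field_simps)
  have "x ^ j = (real j / (t * exp 1)) ^ j * (exp 1 * (t * x / j)) ^ j"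
    by (metis h power_mult_distrib)
  also have "\<dots> \<le> (real j / (t * exp 1)) ^ j * exp (t * x)"
    using * assms by (intro mult_left_mono) auto
  finally show ?thesis .
qed

lemma fact_stirling_lower:
  assumes "j \<ge> 1"
  shows "real j ^ j / fact j \<le> exp 1 * exp (real j) / sqrt (real j)"
proof -
  define m where "m = nat \<lfloor>sqrt (real j)\<rfloor>"
  have sj: "sqrt (real j) \<ge> 1" using assms by simp
  have fl0: "0 \<le> \<lfloor>sqrt (real j)\<rfloor>" by simp
  have mm: "real m = of_int \<lfloor>sqrt (real j)\<rfloor>" unfolding m_def using fl0 by simp
  have m1: "real m \<le> sqrt (real j)" unfolding mm by (rule of_int_floor_le)
  have m2: "sqrt (real j) < real m + 1" unfolding mm by (rule real_of_int_floor_add_one_gt)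
  have mj: "real m ^ 2 \<le> real j"
  proof -
    have "real m ^ 2 \<le> sqrt (real j) ^ 2" using m1 by (intro power_mono) auto
    then show ?thesis by simp
  qed
  have jp: "real j > 0" using assms by simp
  define a where "a = real j ^ j / fact j"
  have a0: "a \<ge> 0" unfolding a_def by simp
  have key: "a / exp 1 \<le> real j ^ (j + i) / fact (j + i)" if "i \<le> m" for i
  proof -
    have f: "fact (j + i) \<le> (fact j :: real) * (real j + real m) ^ i"
      using that
    proof (induction i)
      case 0 then show ?case by simp
    next
      case (Suc i)
      have "fact (j + Suc i) = (fact (j + i) :: real) * (real j + real i + 1)"
        by (simp add: algebra_simps)
      also have "\<dots> \<le> (fact j * (real j + real m) ^ i) * (real j + real m)"
        using Suc by (intro mult_mono) auto
      finally show ?case by (simp add: algebra_simps)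
    qed
    have e1: "(1 + real m / real j) ^ m \<le> exp 1"
    proof -
      have "(1 + real m / real j) ^ m \<le> exp (real m / real j) ^ m"
        by (intro power_mono) (auto simp: exp_ge_add_one_self)
      also have "\<dots> = exp (real m ^ 2 / real j)"
        by (simp add: exp_of_nat_mult[symmetric] power2_eq_square)
      also have "\<dots> \<le> exp 1" using mj jp by simp
      finally show ?thesis .
    qed
    have e2: "(1 + real m / real j) ^ i \<le> (1 + real m / real j) ^ m"
      using that by (intro power_increasing) auto
    have pos: "0 < 1 + real m / real j" using jp by (simp add: add_pos_nonneg)
    have hh: "1 + real m / real j = (real j + real m) / real j" using jp by (simp add: field_simps)
    have "a / exp 1 \<le> a / (1 + real m / real j) ^ i"
      using e1 e2 a0 pos by (intro divide_left_mono) auto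
    also have "\<dots> = a * real j ^ i / (real j + real m) ^ i"
      unfolding hh by (simp add: power_divide)
    also have "\<dots> = real j ^ (j + i) / (fact j * (real j + real m) ^ i)"
      unfolding a_def by (simp add: power_add mult.commute mult.left_commute)
    also have "\<dots> \<le> real j ^ (j + i) / fact (j + i)"
      using f jp by (intro divide_left_mono) auto
    finally show ?thesis .
  qed
  have "(real m + 1) * (a / exp 1) = (\<Sum>i\<le>m. a / exp 1)" by simp
  also have "\<dots> \<le> (\<Sum>i\<le>m. real j ^ (j + i) / fact (j + i))"
    using key by (intro sum_mono) auto
  also have "\<dots> = (\<Sum>n\<in>{j..j+m}. real j ^ n / fact n)"
  proof -
    have "(\<Sum>n\<in>{j..j+m}. real j ^ n / fact n) = (\<Sum>i\<in>{0..m}. real j ^ (i + j) / fact (i + j))"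
      using sum.shift_bounds_cl_nat_ivl[of "\<lambda>n. real j ^ n / fact n" 0 j m] by (simp add: add.commute)
    then show ?thesis by (simp add: atLeast0AtMost add.commute)
  qed
  also have "\<dots> \<le> (\<Sum>n. real j ^ n / fact n)"
    using exp_converges[of "real j"]
    by (intro sum_le_suminf) (auto simp: sums_iff divide_inverse mult.commute)
  also have "\<dots> = exp (real j)"
    using exp_converges[of "real j"] by (simp add: sums_iff divide_inverse mult.commute)
  finally have "(real m + 1) * (a / exp 1) \<le> exp (real j)" .
  then have "exp 1 * ((real m + 1) * (a / exp 1)) \<le> exp 1 * exp (real j)"
    by (intro mult_left_mono) auto
  then have "(real m + 1) * a \<le> exp 1 * exp (real j)" by simp
  moreover have "sqrt (real j) * a \<le> (real m + 1) * a"
    using m2 a0 by (intro mult_right_mono) auto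
  ultimately have "sqrt (real j) * a \<le> exp 1 * exp (real j)" by linarith
  then show ?thesis unfolding a_def[symmetric] using sj
    by (simp add: pos_le_divide_eq mult.commute)
qed

lemma gauss_mgf:
  "(\<integral>\<^sup>+x. ennreal (std_normal_density x * exp (x * s)) \<partial>lborel) = ennreal (exp (s^2/2))"
proof -
  have eq: "std_normal_density x * exp (x * s) = normal_density s 1 x * exp (s^2/2)" for x
  proof -
    have e: "- (x^2) / 2 + x * s = - ((x - s)^2) / (2 * 1^2) + s^2 / 2" for x s :: real
      by (simp add: power2_eq_square field_simps)
    have "exp (- (x^2) / 2) * exp (x * s) = exp (- ((x - s)^2) / (2 * 1^2)) * exp (s^2 / 2)"
      by (simp only: exp_add[symmetric] e)
    then show ?thesis unfolding std_normal_density_def normal_density_def by simp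
  qed
  have "(\<integral>\<^sup>+x. ennreal (std_normal_density x * exp (x * s)) \<partial>lborel)
      = (\<integral>\<^sup>+x. ennreal (normal_density s 1 x) * ennreal (exp (s^2/2)) \<partial>lborel)"
    unfolding eq by (simp add: ennreal_mult)
  also have "\<dots> = (\<integral>\<^sup>+x. ennreal (normal_density s 1 x) \<partial>lborel) * ennreal (exp (s^2/2))"
    by (rule nn_integral_multc) simp
  also have "(\<integral>\<^sup>+x. ennreal (normal_density s 1 x) \<partial>lborel) = 1"
    by (subst nn_integral_eq_integral) auto
  finally show ?thesis by simp
qed

lemma sf_prob: "prob_space M \<Longrightarrow> sigma_finite_measure M"
  by (simp add: prob_space_imp_sigma_finite)

lemma psf1: "prob_space M \<Longrightarrow> pair_sigma_finite M lborel"
  by (simp add: pair_sigma_finite.intro prob_space_imp_sigma_finite lborel.sigma_finite_measure_axioms)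

lemma psf2: "prob_space M \<Longrightarrow> pair_sigma_finite lborel M"
  by (simp add: pair_sigma_finite.intro prob_space_imp_sigma_finite lborel.sigma_finite_measure_axioms)

definition AA :: "real measure \<Rightarrow> real \<Rightarrow> real" where
  "AA M x = (\<integral>y. exp (x * y - y^2/2) \<partial>M)"

lemma AA_integrable:
  fixes x :: real
  assumes "prob_space M" "sets M = sets borel"
  shows "integrable M (\<lambda>y. exp (x * y - y^2/2))"
proof -
  interpret prob_space M by fact
  have b: "x * y - y^2/2 \<le> x^2/2" for y
  proof -
    have "0 \<le> (x - y)^2/2" by simp
    then show ?thesis by (simp add: power2_eq_square field_simps)
  qed
  show ?thesis
  proof (rule integrable_const_bound[where B="exp (x^2/2)"])
    show "AE y in M. norm (exp (x * y - y^2/2)) \<le> exp (x^2/2)" using b by simp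
    show "(\<lambda>y. exp (x * y - y^2/2)) \<in> borel_measurable M"
      using assms(2) by (simp add: measurable_cong_sets[OF assms(2) refl])
  qed
qed

lemma conv_eq_AA:
  assumes "prob_space M" "sets M = sets borel"
  shows "gauss_conv_density M x = std_normal_density x * AA M x"
proof -
  have "std_normal_density (x - y) = std_normal_density x * exp (x * y - y^2/2)" for y
  proof -
    have "-((x-y)^2)/2 = -(x^2)/2 + (x * y - y^2/2)" by (simp add: power2_eq_square field_simps)
    then have "exp (-((x-y)^2)/2) = exp (-(x^2)/2) * exp (x * y - y^2/2)"
      by (simp only: exp_add[symmetric])
    then show ?thesis unfolding std_normal_density_def by simp
  qed
  then show ?thesis unfolding gauss_conv_density_def AA_def by simp
qed

lemma AA_nonneg: "AA M x \<ge> 0"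
  unfolding AA_def by simp

lemma ennreal_AA:
  assumes "prob_space M" "sets M = sets borel" "c \<ge> 0"
  shows "ennreal (c * AA M x) = (\<integral>\<^sup>+y. ennreal (c * exp (x * y - y^2/2)) \<partial>M)"
proof -
  have i: "integrable M (\<lambda>y. c * exp (x * y - y^2/2))"
    using AA_integrable[OF assms(1,2)] by simp
  show ?thesis
    by (subst nn_integral_eq_integral[OF i]) (use assms(3) in \<open>auto simp: AA_def\<close>)
qed

lemma gauss_shift:
  fixes a b :: real
  shows "(\<integral>\<^sup>+x. ennreal (std_normal_density x * exp (x * a - a^2/2) * exp (x * b - b^2/2)) \<partial>lborel)
     = ennreal (exp (a * b))"
proof -
  have eq: "std_normal_density x * exp (x * a - a^2/2) * exp (x * b - b^2/2)
      = std_normal_density x * exp (x * (a + b)) * exp (- (a^2/2) - b^2/2)" for x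
  proof -
    have "x * a - a^2/2 + (x * b - b^2/2) = x * (a + b) + (- (a^2/2) - b^2/2)"
      by (simp add: algebra_simps)
    then have "exp (x * a - a^2/2) * exp (x * b - b^2/2) = exp (x * (a + b)) * exp (- (a^2/2) - b^2/2)"
      by (simp only: exp_add[symmetric])
    then show ?thesis by (simp add: mult.assoc)
  qed
  have "(\<integral>\<^sup>+x. ennreal (std_normal_density x * exp (x * a - a^2/2) * exp (x * b - b^2/2)) \<partial>lborel)
      = (\<integral>\<^sup>+x. ennreal (std_normal_density x * exp (x * (a + b))) * ennreal (exp (- (a^2/2) - b^2/2)) \<partial>lborel)"
    unfolding eq by (simp add: ennreal_mult)
  also have "\<dots> = (\<integral>\<^sup>+x. ennreal (std_normal_density x * exp (x * (a + b))) \<partial>lborel) * ennreal (exp (- (a^2/2) - b^2/2))"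
    by (rule nn_integral_multc) simp
  also have "\<dots> = ennreal (exp ((a+b)^2/2) * exp (- (a^2/2) - b^2/2))"
    unfolding gauss_mgf by (simp add: ennreal_mult)
  also have "exp ((a+b)^2/2) * exp (- (a^2/2) - b^2/2) = exp (a * b)"
  proof -
    have "(a+b)^2/2 + (- (a^2/2) - b^2/2) = a * b" by (simp add: power2_eq_square algebra_simps)
    then show ?thesis by (simp only: exp_add[symmetric])
  qed
  finally show ?thesis .
qed

lemma gauss_AB:
  assumes P1: "prob_space M1" and S1: "sets M1 = sets borel"
    and P2: "prob_space M2" and S2: "sets M2 = sets borel"
  shows "(\<integral>\<^sup>+x. ennreal (std_normal_density x * AA M1 x * AA M2 x) \<partial>lborel)
       = (\<integral>\<^sup>+a. (\<integral>\<^sup>+b. ennreal (exp (a * b)) \<partial>M2) \<partial>M1)"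
proof -
  interpret M1: prob_space M1 by fact
  interpret M2: prob_space M2 by fact
  note [measurable_cong] = S1 S2
  define f where "f x a b = std_normal_density x * exp (x * a - a^2/2) * exp (x * b - b^2/2)" for x a b :: real
  have f_meas[measurable]: "(\<lambda>(a, x). \<integral>\<^sup>+b. ennreal (f x a b) \<partial>M2) \<in> borel_measurable (M1 \<Otimes>\<^sub>M lborel)"
    unfolding f_def by measurable
  have step1: "ennreal (std_normal_density x * AA M1 x * AA M2 x) = (\<integral>\<^sup>+a. (\<integral>\<^sup>+b. ennreal (f x a b) \<partial>M2) \<partial>M1)" for x
  proof -
    have "ennreal (std_normal_density x * AA M1 x * AA M2 x) = ennreal ((std_normal_density x * AA M2 x) * AA M1 x)"
      by (simp add: mult_ac)
    also have "\<dots> = (\<integral>\<^sup>+a. ennreal ((std_normal_density x * AA M2 x) * exp (x * a - a^2/2)) \<partial>M1)"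
      by (rule ennreal_AA[OF P1 S1]) (simp add: AA_nonneg)
    also have "\<dots> = (\<integral>\<^sup>+a. (\<integral>\<^sup>+b. ennreal (f x a b) \<partial>M2) \<partial>M1)"
    proof (rule nn_integral_cong)
      fix a
      have "ennreal ((std_normal_density x * AA M2 x) * exp (x * a - a^2/2))
          = ennreal ((std_normal_density x * exp (x * a - a^2/2)) * AA M2 x)" by (simp add: mult_ac)
      also have "\<dots> = (\<integral>\<^sup>+b. ennreal ((std_normal_density x * exp (x * a - a^2/2)) * exp (x * b - b^2/2)) \<partial>M2)"
        by (rule ennreal_AA[OF P2 S2]) simp
      finally show "ennreal ((std_normal_density x * AA M2 x) * exp (x * a - a^2/2)) = (\<integral>\<^sup>+b. ennreal (f x a b) \<partial>M2)"
        unfolding f_def .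
    qed
    finally show ?thesis .
  qed
  have "(\<integral>\<^sup>+x. ennreal (std_normal_density x * AA M1 x * AA M2 x) \<partial>lborel)
      = (\<integral>\<^sup>+x. (\<integral>\<^sup>+a. (\<integral>\<^sup>+b. ennreal (f x a b) \<partial>M2) \<partial>M1) \<partial>lborel)"
    by (simp add: step1)
  also have "\<dots> = (\<integral>\<^sup>+a. (\<integral>\<^sup>+x. (\<integral>\<^sup>+b. ennreal (f x a b) \<partial>M2) \<partial>lborel) \<partial>M1)"
    by (rule pair_sigma_finite.Fubini'[OF psf1[OF P1] f_meas])
  also have "\<dots> = (\<integral>\<^sup>+a. (\<integral>\<^sup>+b. (\<integral>\<^sup>+x. ennreal (f x a b) \<partial>lborel) \<partial>M2) \<partial>M1)"
  proof (rule nn_integral_cong)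
    fix a
    have m: "(\<lambda>(b, x). ennreal (f x a b)) \<in> borel_measurable (M2 \<Otimes>\<^sub>M lborel)"
      unfolding f_def by measurable
    show "(\<integral>\<^sup>+x. (\<integral>\<^sup>+b. ennreal (f x a b) \<partial>M2) \<partial>lborel) = (\<integral>\<^sup>+b. (\<integral>\<^sup>+x. ennreal (f x a b) \<partial>lborel) \<partial>M2)"
      by (rule pair_sigma_finite.Fubini'[OF psf1[OF P2] m])
  qed
  also have "\<dots> = (\<integral>\<^sup>+a. (\<integral>\<^sup>+b. ennreal (exp (a * b)) \<partial>M2) \<partial>M1)"
    unfolding f_def by (simp add: gauss_shift)
  finally show ?thesis .
qed

lemma tonelli1:
  fixes C :: "nat \<Rightarrow> ennreal"
  assumes "sets M = sets borel"
  shows "(\<integral>\<^sup>+b. (\<Sum>i. C i * ennreal (\<bar>b\<bar> ^ e i)) \<partial>M)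
       = (\<Sum>i. C i * (\<integral>\<^sup>+b. ennreal (\<bar>b\<bar> ^ e i) \<partial>M))"
proof -
  note [measurable_cong] = assms(1)
  have "(\<integral>\<^sup>+b. (\<Sum>i. C i * ennreal (\<bar>b\<bar> ^ e i)) \<partial>M) = (\<Sum>i. \<integral>\<^sup>+b. C i * ennreal (\<bar>b\<bar> ^ e i) \<partial>M)"
    by (rule nn_integral_suminf) measurable
  also have "\<dots> = (\<Sum>i. C i * (\<integral>\<^sup>+b. ennreal (\<bar>b\<bar> ^ e i) \<partial>M))"
    by (rule suminf_cong, rule nn_integral_cmult) measurable
  finally show ?thesis .
qed

lemma tonelli2:
  assumes S1: "sets M1 = sets borel" and S2: "sets M2 = sets borel" and c: "\<And>i. 0 \<le> c i"
  shows "(\<integral>\<^sup>+a. (\<integral>\<^sup>+b. (\<Sum>i. ennreal (c i * \<bar>a\<bar> ^ e i * \<bar>b\<bar> ^ e i)) \<partial>M2) \<partial>M1)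
       = (\<Sum>i. ennreal (c i) * (\<integral>\<^sup>+b. ennreal (\<bar>b\<bar> ^ e i) \<partial>M2) * (\<integral>\<^sup>+a. ennreal (\<bar>a\<bar> ^ e i) \<partial>M1))"
proof -
  have eq1: "ennreal (c i * \<bar>a\<bar> ^ e i * \<bar>b\<bar> ^ e i) = ennreal (c i * \<bar>a\<bar> ^ e i) * ennreal (\<bar>b\<bar> ^ e i)" for i a b
    using c by (simp add: ennreal_mult)
  have eq2: "ennreal (c i * \<bar>a\<bar> ^ e i) * X = (ennreal (c i) * X) * ennreal (\<bar>a\<bar> ^ e i)" for i a X
    using c by (simp add: ennreal_mult mult_ac)
  have "(\<integral>\<^sup>+a. (\<integral>\<^sup>+b. (\<Sum>i. ennreal (c i * \<bar>a\<bar> ^ e i * \<bar>b\<bar> ^ e i)) \<partial>M2) \<partial>M1)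
     = (\<integral>\<^sup>+a. (\<Sum>i. ennreal (c i * \<bar>a\<bar> ^ e i) * (\<integral>\<^sup>+b. ennreal (\<bar>b\<bar> ^ e i) \<partial>M2)) \<partial>M1)"
    unfolding eq1 by (simp only: tonelli1[OF S2])
  also have "\<dots> = (\<integral>\<^sup>+a. (\<Sum>i. (ennreal (c i) * (\<integral>\<^sup>+b. ennreal (\<bar>b\<bar> ^ e i) \<partial>M2)) * ennreal (\<bar>a\<bar> ^ e i)) \<partial>M1)"
    unfolding eq2 ..
  also have "\<dots> = (\<Sum>i. ennreal (c i) * (\<integral>\<^sup>+b. ennreal (\<bar>b\<bar> ^ e i) \<partial>M2) * (\<integral>\<^sup>+a. ennreal (\<bar>a\<bar> ^ e i) \<partial>M1))"
    by (rule tonelli1[OF S1])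
  finally show ?thesis .
qed

lemma exp_le_series:
  fixes a b :: real
  shows "ennreal (exp (a * b)) \<le> (\<Sum>i. ennreal (1 / fact i * \<bar>a\<bar> ^ i * \<bar>b\<bar> ^ i))"
proof -
  have s: "(\<lambda>i. 1 / fact i * \<bar>a\<bar> ^ i * \<bar>b\<bar> ^ i) sums exp (\<bar>a\<bar> * \<bar>b\<bar>)"
    using exp_converges[of "\<bar>a\<bar> * \<bar>b\<bar>"] by (simp add: power_mult_distrib divide_inverse mult_ac)
  have "(\<Sum>i. ennreal (1 / fact i * \<bar>a\<bar> ^ i * \<bar>b\<bar> ^ i)) = ennreal (exp (\<bar>a\<bar> * \<bar>b\<bar>))"
    using s by (subst suminf_ennreal2) (auto simp: sums_iff)
  moreover have "exp (a * b) \<le> exp (\<bar>a\<bar> * \<bar>b\<bar>)"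
    by (simp add: abs_mult[symmetric])
  ultimately show ?thesis by (simp add: ennreal_leI)
qed

lemma exp_tail_le:
  fixes z :: real
  shows "\<bar>exp z - (\<Sum>j\<le>l. z ^ j / fact j)\<bar> \<le> (\<Sum>i. 1 / fact (i + Suc l) * \<bar>z\<bar> ^ (i + Suc l))"
proof -
  have s: "(\<lambda>j. z ^ j / fact j) sums exp z"
    using exp_converges[of z] by (simp add: divide_inverse mult_ac)
  have sa: "(\<lambda>j. \<bar>z\<bar> ^ j / fact j) sums exp \<bar>z\<bar>"
    using exp_converges[of "\<bar>z\<bar>"] by (simp add: divide_inverse mult_ac)
  have t: "(\<lambda>i. z ^ (i + Suc l) / fact (i + Suc l)) sums (exp z - (\<Sum>j<Suc l. z ^ j / fact j))"
    using s by (rule sums_split_initial_segment)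
  have ta: "summable (\<lambda>i. \<bar>z\<bar> ^ (i + Suc l) / fact (i + Suc l))"
    using sa by (intro summable_ignore_initial_segment) (auto simp: sums_iff)
  have "\<bar>exp z - (\<Sum>j\<le>l. z ^ j / fact j)\<bar> = \<bar>\<Sum>i. z ^ (i + Suc l) / fact (i + Suc l)\<bar>"
    using t by (simp add: sums_iff lessThan_Suc_atMost)
  also have "\<dots> \<le> (\<Sum>i. \<bar>z ^ (i + Suc l) / fact (i + Suc l)\<bar>)"
  proof (rule summable_rabs)
    have "(\<lambda>i. \<bar>z ^ (i + Suc l) / fact (i + Suc l)\<bar>) = (\<lambda>i. \<bar>z\<bar> ^ (i + Suc l) / fact (i + Suc l))"
      by (simp only: abs_divide power_abs abs_of_nonneg[OF fact_ge_zero])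
    then show "summable (\<lambda>i. \<bar>z ^ (i + Suc l) / fact (i + Suc l)\<bar>)" using ta by simp
  qed
  also have "\<dots> = (\<Sum>i. 1 / fact (i + Suc l) * \<bar>z\<bar> ^ (i + Suc l))"
    by (simp only: abs_divide power_abs abs_of_nonneg[OF fact_ge_zero]) (simp add: divide_inverse mult.commute)
  finally show ?thesis .
qed

lemma exp_tail_le_enn:
  fixes a b :: real
  shows "ennreal \<bar>exp (a * b) - (\<Sum>j\<le>l. (a * b) ^ j / fact j)\<bar>
     \<le> (\<Sum>i. ennreal (1 / fact (i + Suc l) * \<bar>a\<bar> ^ (i + Suc l) * \<bar>b\<bar> ^ (i + Suc l)))"
proof -
  have sa: "(\<lambda>j. \<bar>a * b\<bar> ^ j / fact j) sums exp \<bar>a * b\<bar>"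
    using exp_converges[of "\<bar>a * b\<bar>"] by (simp add: divide_inverse mult_ac)
  have ta: "summable (\<lambda>i. \<bar>a * b\<bar> ^ (i + Suc l) / fact (i + Suc l))"
    using sa by (intro summable_ignore_initial_segment) (auto simp: sums_iff)
  have eq: "(\<lambda>i. 1 / fact (i + Suc l) * \<bar>a\<bar> ^ (i + Suc l) * \<bar>b\<bar> ^ (i + Suc l))
     = (\<lambda>i. \<bar>a * b\<bar> ^ (i + Suc l) / fact (i + Suc l))"
    by (simp add: abs_mult power_mult_distrib mult_ac)
  have "(\<Sum>i. ennreal (1 / fact (i + Suc l) * \<bar>a\<bar> ^ (i + Suc l) * \<bar>b\<bar> ^ (i + Suc l)))
      = ennreal (\<Sum>i. 1 / fact (i + Suc l) * \<bar>a\<bar> ^ (i + Suc l) * \<bar>b\<bar> ^ (i + Suc l))"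
    by (rule suminf_ennreal2) (use ta eq in auto)
  moreover have "\<bar>exp (a * b) - (\<Sum>j\<le>l. (a * b) ^ j / fact j)\<bar>
     \<le> (\<Sum>i. 1 / fact (i + Suc l) * \<bar>a\<bar> ^ (i + Suc l) * \<bar>b\<bar> ^ (i + Suc l))"
    using exp_tail_le[of "a * b" l] by (simp add: abs_mult power_mult_distrib mult_ac)
  ultimately show ?thesis by (simp add: ennreal_leI)
qed

lemma mom_int:
  assumes P: "prob_space M" and S: "sets M = sets borel"
    and m: "(\<integral>\<^sup>+x. ennreal (\<bar>x\<bar> ^ j) \<partial>M) \<le> ennreal B" and B: "0 \<le> B"
  shows "integrable M (\<lambda>x. x ^ j)" "integrable M (\<lambda>x. \<bar>x\<bar> ^ j)"
    "(\<integral>x. \<bar>x\<bar> ^ j \<partial>M) \<le> B"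
proof -
  note [measurable_cong] = S
  have fin: "(\<integral>\<^sup>+x. ennreal (\<bar>x\<bar> ^ j) \<partial>M) < \<infinity>"
    using m by (simp add: le_less_trans)
  show i1: "integrable M (\<lambda>x. x ^ j)"
    by (rule integrableI_bounded) (use fin in \<open>auto simp: power_abs\<close>)
  show i2: "integrable M (\<lambda>x. \<bar>x\<bar> ^ j)"
    by (rule integrableI_bounded) (use fin in \<open>auto simp: power_abs\<close>)
  have "ennreal (\<integral>x. \<bar>x\<bar> ^ j \<partial>M) = (\<integral>\<^sup>+x. ennreal (\<bar>x\<bar> ^ j) \<partial>M)"
    by (rule nn_integral_eq_integral[symmetric]) (use i2 in auto)
  also have "\<dots> \<le> ennreal B" by fact
  finally show "(\<integral>x. \<bar>x\<bar> ^ j \<partial>M) \<le> B"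
    using B by (simp add: ennreal_le_iff)
qed

lemma series_bound:
  fixes I1 I2 :: "nat \<Rightarrow> ennreal"
  assumes "\<And>i. 0 \<le> c i" "\<And>i. I1 i \<le> ennreal (B i)" "\<And>i. I2 i \<le> ennreal (B i)"
    "\<And>i. 0 \<le> B i" "summable (\<lambda>i. c i * B i ^ 2)"
  shows "(\<Sum>i. ennreal (c i) * I2 i * I1 i) \<le> ennreal (\<Sum>i. c i * B i ^ 2)"
proof -
  have "(\<Sum>i. ennreal (c i) * I2 i * I1 i) \<le> (\<Sum>i. ennreal (c i * B i ^ 2))"
  proof (rule suminf_le[OF _ summableI summableI])
    fix i
    have "ennreal (c i) * I2 i * I1 i \<le> ennreal (c i) * ennreal (B i) * ennreal (B i)"
      using assms by (intro mult_mono) auto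
    also have "\<dots> = ennreal (c i * B i ^ 2)"
      using assms by (simp add: ennreal_mult power2_eq_square mult_ac)
    finally show "ennreal (c i) * I2 i * I1 i \<le> ennreal (c i * B i ^ 2)" .
  qed
  also have "\<dots> = ennreal (\<Sum>i. c i * B i ^ 2)"
    by (rule suminf_ennreal2) (use assms in auto)
  finally show ?thesis .
qed

lemma pair_bound:
  assumes P1: "prob_space M1" and S1: "sets M1 = sets borel"
    and P2: "prob_space M2" and S2: "sets M2 = sets borel"
    and Mnn: "\<And>j. 0 \<le> M j"
    and m1: "\<And>j. (\<integral>\<^sup>+x. ennreal (\<bar>x\<bar> ^ j) \<partial>M1) \<le> ennreal (M j)"
    and m2: "\<And>j. (\<integral>\<^sup>+x. ennreal (\<bar>x\<bar> ^ j) \<partial>M2) \<le> ennreal (M j)"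
    and sm: "summable (\<lambda>j. M j ^ 2 / fact j)"
  shows "(\<integral>\<^sup>+a. (\<integral>\<^sup>+b. ennreal (exp (a * b)) \<partial>M2) \<partial>M1) = ennreal (\<integral>a. (\<integral>b. exp (a * b) \<partial>M2) \<partial>M1)"
    and "\<bar>(\<integral>a. (\<integral>b. exp (a * b) \<partial>M2) \<partial>M1) - (\<Sum>j\<le>l. moment M1 j * moment M2 j / fact j)\<bar>
           \<le> (\<Sum>i. M (i + Suc l) ^ 2 / fact (i + Suc l))"
proof -
  interpret M1: prob_space M1 by fact
  interpret M2: prob_space M2 by fact
  note [measurable_cong] = S1 S2
  define G where "G a = (\<integral>b. exp (a * b) \<partial>M2)" for a
  have inner_fin: "(\<integral>\<^sup>+b. ennreal (exp (a * b)) \<partial>M2) < \<infinity>" for a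
  proof -
    have summ: "summable (\<lambda>i. 1 / fact i * \<bar>a\<bar> ^ i * M i)"
    proof (rule summable_comparison_test)
      have s1: "summable (\<lambda>i. (a^2) ^ i / fact i)"
        using exp_converges[of "a^2"] by (simp add: sums_iff divide_inverse mult.commute)
      show "summable (\<lambda>i. (a^2) ^ i / fact i + M i ^ 2 / fact i)"
        by (rule summable_add[OF s1 sm])
      show "\<exists>N. \<forall>n\<ge>N. norm (1 / fact n * \<bar>a\<bar> ^ n * M n) \<le> (a^2) ^ n / fact n + M n ^ 2 / fact n"
      proof (intro exI allI impI)
        fix n :: nat
        have amgm: "\<bar>a\<bar> ^ n * M n \<le> (\<bar>a\<bar> ^ n) ^ 2 + M n ^ 2"
        proof -
          have "0 \<le> (\<bar>a\<bar> ^ n - M n) ^ 2" by simp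
          moreover have "0 \<le> \<bar>a\<bar> ^ n * M n" using Mnn by simp
          ultimately show ?thesis by (simp add: power2_eq_square algebra_simps)
        qed
        have "(\<bar>a\<bar> ^ n) ^ 2 = (a^2) ^ n" by (simp add: power_even_abs power_mult[symmetric] mult.commute)
        then have "\<bar>a\<bar> ^ n * M n / fact n \<le> ((a^2) ^ n + M n ^ 2) / fact n"
          using amgm by (intro divide_right_mono) auto
        then show "norm (1 / fact n * \<bar>a\<bar> ^ n * M n) \<le> (a^2) ^ n / fact n + M n ^ 2 / fact n"
          using Mnn by (simp add: add_divide_distrib)
      qed
    qed
    have "(\<integral>\<^sup>+b. ennreal (exp (a * b)) \<partial>M2) \<le> (\<integral>\<^sup>+b. (\<Sum>i. ennreal (1 / fact i * \<bar>a\<bar> ^ i * \<bar>b\<bar> ^ i)) \<partial>M2)"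
      by (intro nn_integral_mono exp_le_series)
    also have "\<dots> = (\<integral>\<^sup>+b. (\<Sum>i. ennreal (1 / fact i * \<bar>a\<bar> ^ i) * ennreal (\<bar>b\<bar> ^ (\<lambda>i. i) i)) \<partial>M2)"
      by (intro nn_integral_cong suminf_cong) (simp add: ennreal_mult[symmetric])
    also have "\<dots> = (\<Sum>i. ennreal (1 / fact i * \<bar>a\<bar> ^ i) * (\<integral>\<^sup>+b. ennreal (\<bar>b\<bar> ^ (\<lambda>i. i) i) \<partial>M2))"
      by (rule tonelli1[OF S2])
    also have "\<dots> \<le> (\<Sum>i. ennreal (1 / fact i * \<bar>a\<bar> ^ i * M i))"
    proof (rule suminf_le[OF _ summableI summableI])
      fix i
      have "ennreal (1 / fact i * \<bar>a\<bar> ^ i) * (\<integral>\<^sup>+b. ennreal (\<bar>b\<bar> ^ (\<lambda>i. i) i) \<partial>M2)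
          \<le> ennreal (1 / fact i * \<bar>a\<bar> ^ i) * ennreal (M i)"
        using m2[of i] by (intro mult_left_mono) auto
      also have "ennreal (1 / fact i * \<bar>a\<bar> ^ i) * ennreal (M i) = ennreal (1 / fact i * \<bar>a\<bar> ^ i * M i)"
        by (rule ennreal_mult[symmetric]) (use Mnn in auto)
      finally show "ennreal (1 / fact i * \<bar>a\<bar> ^ i) * (\<integral>\<^sup>+b. ennreal (\<bar>b\<bar> ^ (\<lambda>i. i) i) \<partial>M2)
          \<le> ennreal (1 / fact i * \<bar>a\<bar> ^ i * M i)" .
    qed
    also have "\<dots> = ennreal (\<Sum>i. 1 / fact i * \<bar>a\<bar> ^ i * M i)"
      by (rule suminf_ennreal2) (use Mnn summ in auto)
    also have "\<dots> < \<infinity>" by simp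
    finally show ?thesis .
  qed
  have Gint: "integrable M2 (\<lambda>b. exp (a * b))" for a
    by (rule integrableI_bounded) (use inner_fin in auto)
  have Genn: "ennreal (G a) = (\<integral>\<^sup>+b. ennreal (exp (a * b)) \<partial>M2)" for a
    unfolding G_def by (rule nn_integral_eq_integral[symmetric]) (use Gint in auto)
  have Gmeas[measurable]: "G \<in> borel_measurable M1"
    unfolding G_def by measurable
  have sm1: "summable (\<lambda>i. 1 / fact i * M i ^ 2)"
    using sm by (simp add: divide_inverse mult.commute)
  have full: "(\<integral>\<^sup>+a. (\<integral>\<^sup>+b. ennreal (exp (a * b)) \<partial>M2) \<partial>M1) \<le> ennreal (\<Sum>i. 1 / fact i * M i ^ 2)"
  proof -
    have "(\<integral>\<^sup>+a. (\<integral>\<^sup>+b. ennreal (exp (a * b)) \<partial>M2) \<partial>M1)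
        \<le> (\<integral>\<^sup>+a. (\<integral>\<^sup>+b. (\<Sum>i. ennreal (1 / fact i * \<bar>a\<bar> ^ i * \<bar>b\<bar> ^ i)) \<partial>M2) \<partial>M1)"
      by (intro nn_integral_mono exp_le_series)
    also have "\<dots> = (\<Sum>i. ennreal (1 / fact i) * (\<integral>\<^sup>+b. ennreal (\<bar>b\<bar> ^ i) \<partial>M2) * (\<integral>\<^sup>+a. ennreal (\<bar>a\<bar> ^ i) \<partial>M1))"
      by (rule tonelli2[OF S1 S2, of "\<lambda>i. 1 / fact i" "\<lambda>i. i"]) simp
    also have "\<dots> \<le> ennreal (\<Sum>i. 1 / fact i * M i ^ 2)"
      by (rule series_bound) (use m1 m2 Mnn sm1 in auto)
    finally show ?thesis .
  qed
  have Gnn: "0 \<le> G a" for a unfolding G_def by simp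
  have Gint1: "integrable M1 G"
  proof (rule integrableI_bounded)
    have "(\<integral>\<^sup>+a. ennreal (norm (G a)) \<partial>M1) = (\<integral>\<^sup>+a. (\<integral>\<^sup>+b. ennreal (exp (a * b)) \<partial>M2) \<partial>M1)"
      using Gnn Genn by simp
    also have "\<dots> < \<infinity>" using full by (simp add: le_less_trans)
    finally show "(\<integral>\<^sup>+a. ennreal (norm (G a)) \<partial>M1) < \<infinity>" .
  qed simp
  show i: "(\<integral>\<^sup>+a. (\<integral>\<^sup>+b. ennreal (exp (a * b)) \<partial>M2) \<partial>M1) = ennreal (\<integral>a. (\<integral>b. exp (a * b) \<partial>M2) \<partial>M1)"
    using nn_integral_eq_integral[OF Gint1] Gnn Genn unfolding G_def by simp
  show "\<bar>(\<integral>a. (\<integral>b. exp (a * b) \<partial>M2) \<partial>M1) - (\<Sum>j\<le>l. moment M1 j * moment M2 j / fact j)\<bar>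
           \<le> (\<Sum>i. M (i + Suc l) ^ 2 / fact (i + Suc l))"
  proof -
    have int1: "integrable M1 (\<lambda>x. x ^ j)" for j using mom_int(1)[OF P1 S1 m1 Mnn] .
    have int2: "integrable M2 (\<lambda>x. x ^ j)" for j using mom_int(1)[OF P2 S2 m2 Mnn] .
    define Pl where "Pl a = (\<Sum>j\<le>l. a ^ j * (moment M2 j / fact j))" for a :: real
    define R where "R a b = exp (a * b) - (\<Sum>j\<le>l. (a * b) ^ j / fact j)" for a b :: real
    have Rint: "integrable M2 (R a)" for a
      unfolding R_def
      by (intro Bochner_Integration.integrable_diff Gint Bochner_Integration.integrable_sum)
         (simp add: power_mult_distrib int2)
    have GP: "G a - Pl a = (\<integral>b. R a b \<partial>M2)" for a
    proof -
      have "(\<integral>b. R a b \<partial>M2) = G a - (\<integral>b. (\<Sum>j\<le>l. (a * b) ^ j / fact j) \<partial>M2)"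
        unfolding R_def G_def
        by (rule Bochner_Integration.integral_diff[OF Gint Bochner_Integration.integrable_sum])
           (simp add: power_mult_distrib int2)
      also have "(\<integral>b. (\<Sum>j\<le>l. (a * b) ^ j / fact j) \<partial>M2) = (\<Sum>j\<le>l. \<integral>b. (a * b) ^ j / fact j \<partial>M2)"
        by (rule Bochner_Integration.integral_sum) (simp add: power_mult_distrib int2)
      also have "\<dots> = Pl a"
        unfolding Pl_def
      proof (rule sum.cong[OF refl])
        fix j
        have "(\<integral>b. (a * b) ^ j / fact j \<partial>M2) = (\<integral>b. (a ^ j / fact j) * b ^ j \<partial>M2)"
          by (simp add: power_mult_distrib mult_ac)
        also have "\<dots> = (a ^ j / fact j) * moment M2 j"
          unfolding moment_def by simp
        finally show "(\<integral>b. (a * b) ^ j / fact j \<partial>M2) = a ^ j * (moment M2 j / fact j)" by simp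
      qed
      finally show ?thesis by simp
    qed
    have Plint: "integrable M1 Pl"
      unfolding Pl_def by (intro Bochner_Integration.integrable_sum Bochner_Integration.integrable_mult_left int1)
    have PlI: "(\<integral>a. Pl a \<partial>M1) = (\<Sum>j\<le>l. moment M1 j * moment M2 j / fact j)"
    proof -
      have "(\<integral>a. Pl a \<partial>M1) = (\<Sum>j\<le>l. \<integral>a. a ^ j * (moment M2 j / fact j) \<partial>M1)"
        unfolding Pl_def
        by (rule Bochner_Integration.integral_sum) (intro Bochner_Integration.integrable_mult_left int1)
      also have "\<dots> = (\<Sum>j\<le>l. moment M1 j * moment M2 j / fact j)"
        by (simp add: moment_def)
      finally show ?thesis .
    qed
    have KP: "(\<integral>a. G a \<partial>M1) - (\<Sum>j\<le>l. moment M1 j * moment M2 j / fact j) = (\<integral>a. (\<integral>b. R a b \<partial>M2) \<partial>M1)"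
      unfolding PlI[symmetric] GP[symmetric]
      by (rule Bochner_Integration.integral_diff[OF Gint1 Plint, symmetric])
    have sm2: "summable (\<lambda>i. 1 / fact (i + Suc l) * M (i + Suc l) ^ 2)"
      using summable_ignore_initial_segment[OF sm, of "Suc l"] by (simp add: divide_inverse mult.commute)
    have "ennreal \<bar>\<integral>a. (\<integral>b. R a b \<partial>M2) \<partial>M1\<bar> \<le> (\<integral>\<^sup>+a. ennreal (norm (\<integral>b. R a b \<partial>M2)) \<partial>M1)"
      using integral_norm_bound_ennreal[of M1 "\<lambda>a. \<integral>b. R a b \<partial>M2"]
        Bochner_Integration.integrable_diff[OF Gint1 Plint] GP by (simp add: fun_diff_def)
    also have "\<dots> \<le> (\<integral>\<^sup>+a. (\<integral>\<^sup>+b. ennreal (norm (R a b)) \<partial>M2) \<partial>M1)"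
      by (intro nn_integral_mono integral_norm_bound_ennreal Rint)
    also have "\<dots> \<le> (\<integral>\<^sup>+a. (\<integral>\<^sup>+b. (\<Sum>i. ennreal (1 / fact (i + Suc l) * \<bar>a\<bar> ^ (i + Suc l) * \<bar>b\<bar> ^ (i + Suc l))) \<partial>M2) \<partial>M1)"
      unfolding R_def real_norm_def by (intro nn_integral_mono exp_tail_le_enn)
    also have "\<dots> = (\<Sum>i. ennreal (1 / fact (i + Suc l)) * (\<integral>\<^sup>+b. ennreal (\<bar>b\<bar> ^ (i + Suc l)) \<partial>M2) * (\<integral>\<^sup>+a. ennreal (\<bar>a\<bar> ^ (i + Suc l)) \<partial>M1))"
      by (rule tonelli2[OF S1 S2, of "\<lambda>i. 1 / fact (i + Suc l)" "\<lambda>i. i + Suc l"]) simp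
    also have "\<dots> \<le> ennreal (\<Sum>i. 1 / fact (i + Suc l) * M (i + Suc l) ^ 2)"
      by (rule series_bound[where B="\<lambda>i. M (i + Suc l)"]) (simp, rule m1, rule m2, rule Mnn, rule sm2)
    finally have X: "ennreal \<bar>\<integral>a. (\<integral>b. R a b \<partial>M2) \<partial>M1\<bar> \<le> ennreal (\<Sum>i. 1 / fact (i + Suc l) * M (i + Suc l) ^ 2)" .
    have S0: "0 \<le> (\<Sum>i. 1 / fact (i + Suc l) * M (i + Suc l) ^ 2)"
      by (rule suminf_nonneg[OF sm2]) simp
    have "\<bar>\<integral>a. (\<integral>b. R a b \<partial>M2) \<partial>M1\<bar> \<le> (\<Sum>i. 1 / fact (i + Suc l) * M (i + Suc l) ^ 2)"
      using X ennreal_le_iff[OF S0] by blast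
    then show ?thesis
      using KP unfolding G_def by (simp add: divide_inverse mult.commute)
  qed
qed

lemma int_AB:
  assumes P1: "prob_space M1" and S1: "sets M1 = sets borel"
    and P2: "prob_space M2" and S2: "sets M2 = sets borel"
    and Mnn: "\<And>j. 0 \<le> M j"
    and m1: "\<And>j. (\<integral>\<^sup>+x. ennreal (\<bar>x\<bar> ^ j) \<partial>M1) \<le> ennreal (M j)"
    and m2: "\<And>j. (\<integral>\<^sup>+x. ennreal (\<bar>x\<bar> ^ j) \<partial>M2) \<le> ennreal (M j)"
    and sm: "summable (\<lambda>j. M j ^ 2 / fact j)"
  shows "integrable lborel (\<lambda>x. std_normal_density x * AA M1 x * AA M2 x)"
    and "(\<integral>x. std_normal_density x * AA M1 x * AA M2 x \<partial>lborel) = (\<integral>a. (\<integral>b. exp (a * b) \<partial>M2) \<partial>M1)"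
proof -
  interpret M1: prob_space M1 by fact
  interpret M2: prob_space M2 by fact
  note [measurable_cong] = S1 S2
  have meas[measurable]: "(\<lambda>x. std_normal_density x * AA M1 x * AA M2 x) \<in> borel_measurable lborel"
    unfolding AA_def by measurable
  have nn: "0 \<le> std_normal_density x * AA M1 x * AA M2 x" for x
    by (simp add: AA_nonneg)
  have e: "(\<integral>\<^sup>+x. ennreal (std_normal_density x * AA M1 x * AA M2 x) \<partial>lborel) = ennreal (\<integral>a. (\<integral>b. exp (a * b) \<partial>M2) \<partial>M1)"
    using gauss_AB[OF P1 S1 P2 S2] pair_bound(1)[OF P1 S1 P2 S2 Mnn m1 m2 sm] by simp
  show i: "integrable lborel (\<lambda>x. std_normal_density x * AA M1 x * AA M2 x)"
    by (rule integrableI_bounded) (use nn e in auto)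
  have "ennreal (\<integral>x. std_normal_density x * AA M1 x * AA M2 x \<partial>lborel) = ennreal (\<integral>a. (\<integral>b. exp (a * b) \<partial>M2) \<partial>M1)"
    using nn_integral_eq_integral[OF i] nn e by simp
  moreover have "0 \<le> (\<integral>x. std_normal_density x * AA M1 x * AA M2 x \<partial>lborel)"
    using nn by simp
  moreover have "0 \<le> (\<integral>a. (\<integral>b. exp (a * b) \<partial>M2) \<partial>M1)"
    by simp
  ultimately show "(\<integral>x. std_normal_density x * AA M1 x * AA M2 x \<partial>lborel) = (\<integral>a. (\<integral>b. exp (a * b) \<partial>M2) \<partial>M1)"
    by simp
qed

lemma AA_lower:
  assumes P: "prob_space M" and S: "sets M = sets borel" and c: "centered M"
    and m: "(\<integral>\<^sup>+x. ennreal (\<bar>x\<bar> ^ 2) \<partial>M) \<le> ennreal B" and B: "0 \<le> B" "B \<le> 8/5"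
  shows "AA M x \<ge> 1/5"
proof -
  interpret prob_space M by fact
  have i1: "integrable M (\<lambda>y. y)" and e1: "(\<integral>y. y \<partial>M) = 0" using c unfolding centered_def by auto
  have i2: "integrable M (\<lambda>y. y ^ 2)" using mom_int(1)[OF P S m B(1)] .
  have b2: "(\<integral>y. y ^ 2 \<partial>M) \<le> B" using mom_int(3)[OF P S m B(1)] by simp
  have "(\<integral>y. 1 + x * y - y ^ 2 / 2 \<partial>M) \<le> AA M x"
    unfolding AA_def
  proof (rule integral_mono)
    show "integrable M (\<lambda>y. 1 + x * y - y ^ 2 / 2)" using i1 i2 by auto
    show "integrable M (\<lambda>y. exp (x * y - y ^ 2 / 2))" by (rule AA_integrable[OF P S])
    show "1 + x * y - y ^ 2 / 2 \<le> exp (x * y - y ^ 2 / 2)" for y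
      using exp_ge_add_one_self[of "x * y - y ^ 2 / 2"] by linarith
  qed
  moreover have "(\<integral>y. 1 + x * y - y ^ 2 / 2 \<partial>M) = 1 + x * (\<integral>y. y \<partial>M) - (\<integral>y. y ^ 2 \<partial>M) / 2"
    using i1 i2 by (simp add: prob_space)
  ultimately show ?thesis using e1 b2 B by simp
qed

lemma core:
  assumes P1: "prob_space N1" and S1: "sets N1 = sets borel"
    and P2: "prob_space N2" and S2: "sets N2 = sets borel"
    and c2: "centered N2"
    and Mnn: "\<And>j. 0 \<le> M j"
    and m1: "\<And>j. (\<integral>\<^sup>+x. ennreal (\<bar>x\<bar> ^ j) \<partial>N1) \<le> ennreal (M j)"
    and m2: "\<And>j. (\<integral>\<^sup>+x. ennreal (\<bar>x\<bar> ^ j) \<partial>N2) \<le> ennreal (M j)"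
    and sm: "summable (\<lambda>j. M j ^ 2 / fact j)"
    and M2: "M 2 \<le> 8/5"
    and eqm: "\<forall>j\<in>{1..l}. moment N1 j = moment N2 j"
  shows "chi2 (gauss_conv_density N1) (gauss_conv_density N2)
           \<le> ennreal (20 * (\<Sum>i. M (i + Suc l) ^ 2 / fact (i + Suc l)))"
proof -
  interpret N1: prob_space N1 by fact
  interpret N2: prob_space N2 by fact
  note [measurable_cong] = S1 S2
  define S where "S = (\<Sum>i. M (i + Suc l) ^ 2 / fact (i + Suc l))"
  define A where "A = AA N1"
  define B where "B = AA N2"
  define \<phi> where "\<phi> = std_normal_density"
  define D where "D x = \<phi> x * A x * A x + \<phi> x * B x * B x - 2 * (\<phi> x * A x * B x)" for x
  have Blow: "B x \<ge> 1/5" for x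
    unfolding B_def by (rule AA_lower[OF P2 S2 c2 m2 Mnn M2])
  have phipos: "\<phi> x > 0" for x unfolding \<phi>_def by (simp add: normal_density_pos)
  have Dsq: "D x = \<phi> x * (A x - B x)^2" for x
    unfolding D_def by (simp add: power2_eq_square algebra_simps)
  have Dnn: "D x \<ge> 0" for x using Dsq phipos by (simp add: less_imp_le)
  have pw: "(gauss_conv_density N1 x - gauss_conv_density N2 x)^2 / gauss_conv_density N2 x \<le> 5 * D x" for x
  proof -
    have bp: "B x > 0" using Blow[of x] by linarith
    have "(gauss_conv_density N1 x - gauss_conv_density N2 x)^2 / gauss_conv_density N2 x
        = (\<phi> x * A x - \<phi> x * B x)^2 / (\<phi> x * B x)"
      unfolding conv_eq_AA[OF P1 S1] conv_eq_AA[OF P2 S2] A_def B_def \<phi>_def ..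
    also have "\<dots> = D x / B x"
      unfolding Dsq using phipos[of x] bp by (simp add: power2_eq_square field_simps)
    also have "\<dots> \<le> D x / (1/5)"
      using Dnn[of x] Blow[of x] by (intro divide_left_mono) auto
    finally show ?thesis by simp
  qed
  have K11: "integrable lborel (\<lambda>x. \<phi> x * A x * A x)" "(\<integral>x. \<phi> x * A x * A x \<partial>lborel) = (\<integral>a. (\<integral>b. exp (a * b) \<partial>N1) \<partial>N1)"
    unfolding \<phi>_def A_def using int_AB[OF P1 S1 P1 S1 Mnn m1 m1 sm] by auto
  have K22: "integrable lborel (\<lambda>x. \<phi> x * B x * B x)" "(\<integral>x. \<phi> x * B x * B x \<partial>lborel) = (\<integral>a. (\<integral>b. exp (a * b) \<partial>N2) \<partial>N2)"
    unfolding \<phi>_def B_def using int_AB[OF P2 S2 P2 S2 Mnn m2 m2 sm] by auto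
  have K12: "integrable lborel (\<lambda>x. \<phi> x * A x * B x)" "(\<integral>x. \<phi> x * A x * B x \<partial>lborel) = (\<integral>a. (\<integral>b. exp (a * b) \<partial>N2) \<partial>N1)"
    unfolding \<phi>_def A_def B_def using int_AB[OF P1 S1 P2 S2 Mnn m1 m2 sm] by auto
  have Dint: "integrable lborel D"
    unfolding D_def using K11(1) K22(1) K12(1) by auto
  have DI: "(\<integral>x. D x \<partial>lborel) = (\<integral>a. (\<integral>b. exp (a * b) \<partial>N1) \<partial>N1) + (\<integral>a. (\<integral>b. exp (a * b) \<partial>N2) \<partial>N2)
      - 2 * (\<integral>a. (\<integral>b. exp (a * b) \<partial>N2) \<partial>N1)"
    unfolding D_def using K11 K22 K12 by simp
  note b11 = pair_bound(2)[OF P1 S1 P1 S1 Mnn m1 m1 sm, of l]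
  note b22 = pair_bound(2)[OF P2 S2 P2 S2 Mnn m2 m2 sm, of l]
  note b12 = pair_bound(2)[OF P1 S1 P2 S2 Mnn m1 m2 sm, of l]
  have mom0: "moment N1 0 = moment N2 0" unfolding moment_def by (simp add: N1.prob_space N2.prob_space)
  have momeq: "moment N1 j = moment N2 j" if "j \<le> l" for j
    using eqm mom0 that by (cases j) auto
  have Peq: "(\<Sum>j\<le>l. moment N1 j * moment N1 j / fact j) = (\<Sum>j\<le>l. moment N1 j * moment N2 j / fact j)"
       "(\<Sum>j\<le>l. moment N2 j * moment N2 j / fact j) = (\<Sum>j\<le>l. moment N1 j * moment N2 j / fact j)"
    using momeq by (auto intro!: sum.cong)
  have "(\<integral>x. D x \<partial>lborel) \<le> 4 * S"
    unfolding DI S_def using b11 b22 b12 Peq by (simp add: abs_le_iff)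
  have "chi2 (gauss_conv_density N1) (gauss_conv_density N2) \<le> (\<integral>\<^sup>+x. ennreal (5 * D x) \<partial>lborel)"
    unfolding chi2_def by (intro nn_integral_mono ennreal_leI pw)
  also have "\<dots> = 5 * (\<integral>\<^sup>+x. ennreal (D x) \<partial>lborel)"
  proof -
    have Dm: "D \<in> borel_measurable borel" using borel_measurable_integrable[OF Dint] by simp
    show ?thesis using Dnn Dm by (subst nn_integral_cmult[symmetric]) (auto simp: ennreal_mult)
  qed
  also have "(\<integral>\<^sup>+x. ennreal (D x) \<partial>lborel) = ennreal (\<integral>x. D x \<partial>lborel)"
    by (rule nn_integral_eq_integral[OF Dint]) (simp add: Dnn)
  also have "5 * ennreal (\<integral>x. D x \<partial>lborel) \<le> 5 * ennreal (4 * S)"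
    using \<open>(\<integral>x. D x \<partial>lborel) \<le> 4 * S\<close> by (intro mult_left_mono ennreal_leI) auto
  also have "5 * ennreal (4 * S) = ennreal (20 * S)"
  proof (cases "0 \<le> S")
    case True then show ?thesis using ennreal_mult[of 5 "4*S"] by simp
  next
    case False then show ?thesis by (simp add: ennreal_neg)
  qed
  finally show ?thesis unfolding S_def .
qed

lemma sg_gen:
  assumes P: "prob_space M" and S: "sets M = sets borel" and sg: "subgaussian M \<epsilon>" and t: "0 < t"
  shows "(\<integral>\<^sup>+x. ennreal (\<bar>x\<bar> ^ j) \<partial>M) \<le> ennreal ((real j / (t * exp 1)) ^ j * (2 * exp (t^2 * \<epsilon>^2 / 2)))"
proof -
  interpret prob_space M by fact
  note [measurable_cong] = S
  define c where "c = (real j / (t * exp 1)) ^ j"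
  have c0: "0 \<le> c" unfolding c_def using t by simp
  have i1: "integrable M (\<lambda>x. exp (t * x))" and b1: "(\<integral>x. exp (t * x) \<partial>M) \<le> exp (t^2 * \<epsilon>^2 / 2)"
    using sg unfolding subgaussian_def by auto
  have i2: "integrable M (\<lambda>x. exp ((- t) * x))" and b2: "(\<integral>x. exp ((- t) * x) \<partial>M) \<le> exp (t^2 * \<epsilon>^2 / 2)"
    using sg unfolding subgaussian_def by (metis power2_minus)+
  have pw: "\<bar>x\<bar> ^ j \<le> c * (exp (t * x) + exp ((- t) * x))" for x
  proof -
    have "\<bar>x\<bar> ^ j \<le> c * exp (t * \<bar>x\<bar>)" unfolding c_def using pow_le_exp[of "\<bar>x\<bar>" t j] t by simp
    also have "exp (t * \<bar>x\<bar>) \<le> exp (t * x) + exp ((- t) * x)"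
      by (cases "x \<ge> 0") auto
    then have "c * exp (t * \<bar>x\<bar>) \<le> c * (exp (t * x) + exp ((- t) * x))"
      using c0 by (rule mult_left_mono)
    finally show ?thesis .
  qed
  have ii: "integrable M (\<lambda>x. c * (exp (t * x) + exp ((- t) * x)))"
    using i1 i2 by auto
  have "(\<integral>\<^sup>+x. ennreal (\<bar>x\<bar> ^ j) \<partial>M) \<le> (\<integral>\<^sup>+x. ennreal (c * (exp (t * x) + exp ((- t) * x))) \<partial>M)"
    by (intro nn_integral_mono ennreal_leI pw)
  also have "\<dots> = ennreal (\<integral>x. c * (exp (t * x) + exp ((- t) * x)) \<partial>M)"
    by (rule nn_integral_eq_integral[OF ii]) (use c0 in simp)
  also have "(\<integral>x. c * (exp (t * x) + exp ((- t) * x)) \<partial>M) = c * ((\<integral>x. exp (t * x) \<partial>M) + (\<integral>x. exp ((- t) * x) \<partial>M))"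
    using i1 i2 by simp
  also have "\<dots> \<le> c * (2 * exp (t^2 * \<epsilon>^2 / 2))"
    using b1 b2 c0 by (intro mult_left_mono) auto
  finally show ?thesis unfolding c_def by (simp add: ennreal_leI)
qed

lemma sqrt_exp1: "sqrt (exp 1) = exp (1/2)"
proof -
  have "exp (1/2) ^ 2 = exp (1::real)" by (simp add: exp_of_nat_mult[symmetric])
  then show ?thesis by (metis exp_ge_zero real_sqrt_unique)
qed

lemma sg_moment:
  assumes P: "prob_space M" and S: "sets M = sets borel" and sg: "subgaussian M \<epsilon>" and e0: "0 \<le> \<epsilon>"
  shows "(\<integral>\<^sup>+x. ennreal (\<bar>x\<bar> ^ j) \<partial>M) \<le> ennreal (2 * (\<epsilon> * sqrt (real j / exp 1)) ^ j)"
proof -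
  interpret prob_space M by fact
  note [measurable_cong] = S
  show ?thesis
  proof (cases "j = 0")
    case True
    then show ?thesis by (simp add: emeasure_space_1)
  next
    case False
    then have jp: "0 < real j" by simp
    show ?thesis
    proof (cases "\<epsilon> = 0")
      case False
      then have ep: "0 < \<epsilon>" using e0 by simp
      define t where "t = sqrt (real j) / \<epsilon>"
      have tp: "0 < t" unfolding t_def using ep jp by simp
      have "(\<integral>\<^sup>+x. ennreal (\<bar>x\<bar> ^ j) \<partial>M) \<le> ennreal ((real j / (t * exp 1)) ^ j * (2 * exp (t^2 * \<epsilon>^2 / 2)))"
        by (rule sg_gen[OF P S sg tp])
      also have "(real j / (t * exp 1)) ^ j * (2 * exp (t^2 * \<epsilon>^2 / 2)) = 2 * (\<epsilon> * sqrt (real j / exp 1)) ^ j"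
      proof -
        have t2: "t^2 * \<epsilon>^2 / 2 = real j * (1/2)"
          unfolding t_def using ep jp by (simp add: power_divide)
        have ex: "exp (t^2 * \<epsilon>^2 / 2) = sqrt (exp 1) ^ j"
          unfolding t2 sqrt_exp1 by (simp add: exp_of_nat_mult[symmetric])
        have b: "real j / (t * exp 1) * sqrt (exp 1) = \<epsilon> * sqrt (real j / exp 1)"
        proof -
          have sj: "sqrt (real j) * sqrt (real j) = real j" using jp by simp
          have se: "sqrt (exp 1) * sqrt (exp 1) = exp (1::real)" by simp
          have sp: "0 < sqrt (exp (1::real))" by simp
          show ?thesis unfolding t_def real_sqrt_divide using ep jp sj se sp
            by (simp add: field_simps)
        qed
        have "(real j / (t * exp 1)) ^ j * (2 * exp (t^2 * \<epsilon>^2 / 2)) = 2 * (real j / (t * exp 1) * sqrt (exp 1)) ^ j"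
          unfolding ex by (simp only: power_mult_distrib mult_ac)
        then show ?thesis unfolding b .
      qed
      finally show ?thesis .
    next
      case True
      have i: "integrable M (\<lambda>x. \<bar>x\<bar> ^ j)"
        using mom_int(2)[OF P S sg_gen[OF P S sg, of 1 j]] by simp
      have v: "(\<integral>x. \<bar>x\<bar> ^ j \<partial>M) \<le> (real j / (t * exp 1)) ^ j * 2" if "0 < t" for t
        using mom_int(3)[OF P S sg_gen[OF P S sg that, of j]] True that jp by simp
      have "(\<integral>x. \<bar>x\<bar> ^ j \<partial>M) \<le> 0"
      proof (rule ccontr)
        assume "\<not> ?thesis"
        then have vp: "0 < (\<integral>x. \<bar>x\<bar> ^ j \<partial>M)" by simp
        define u where "u = min (1/2) ((\<integral>x. \<bar>x\<bar> ^ j \<partial>M) / 4)"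
        have up: "0 < u" and u1: "u \<le> 1" unfolding u_def using vp by auto
        define t where "t = real j / (exp 1 * u)"
        have tp: "0 < t" unfolding t_def using up jp by simp
        have "real j / (t * exp 1) = u" unfolding t_def using up jp by (simp add: field_simps)
        then have "(\<integral>x. \<bar>x\<bar> ^ j \<partial>M) \<le> u ^ j * 2" using v[OF tp] by simp
        also have "u ^ j \<le> u ^ 1" using up u1 \<open>j \<noteq> 0\<close> by (intro power_decreasing) auto
        then have "u ^ j * 2 \<le> u * 2" by simp
        finally have "(\<integral>x. \<bar>x\<bar> ^ j \<partial>M) \<le> u * 2" .
        moreover have "u * 2 \<le> (\<integral>x. \<bar>x\<bar> ^ j \<partial>M) / 2" unfolding u_def by linarith
        ultimately show False using vp by linarith
      qed
      moreover have "0 \<le> (\<integral>x. \<bar>x\<bar> ^ j \<partial>M)" by simp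
      ultimately have z: "(\<integral>x. \<bar>x\<bar> ^ j \<partial>M) = 0" by linarith
      have "(\<integral>\<^sup>+x. ennreal (\<bar>x\<bar> ^ j) \<partial>M) = 0"
        using nn_integral_eq_integral[OF i] z by simp
      then show ?thesis by simp
    qed
  qed
qed

lemma Msg_sq: "(2 * (\<epsilon> * sqrt (real j / exp 1)) ^ j) ^ 2 / fact j = 4 * (\<epsilon>^2) ^ j * (real j ^ j / (exp (real j) * fact j))"
proof -
  have pm: "(y ^ j) ^ 2 = (y ^ 2) ^ j" for y :: real
    by (simp only: power_mult[symmetric] mult.commute)
  have "(2 * (\<epsilon> * sqrt (real j / exp 1)) ^ j) ^ 2 = 4 * ((\<epsilon> * sqrt (real j / exp 1))^2) ^ j"
    by (simp only: power_mult_distrib[of 2] pm) simp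
  also have "(\<epsilon> * sqrt (real j / exp 1))^2 = \<epsilon>^2 * (real j / exp 1)"
    by (simp add: power_mult_distrib)
  also have "(\<epsilon>^2 * (real j / exp 1)) ^ j = (\<epsilon>^2)^j * (real j ^ j / exp (real j))"
    by (simp add: power_mult_distrib power_divide exp_of_nat_mult[symmetric])
  finally show ?thesis by (simp add: field_simps)
qed

lemma jj_bound: "j \<ge> 1 \<Longrightarrow> real j ^ j / (exp (real j) * fact j) \<le> exp 1 / sqrt (real j)"
  using fact_stirling_lower[of j] by (simp add: field_simps)

lemma jj_bound0: "real j ^ j / (exp (real j) * fact j) \<le> exp 1"
proof (cases "j = 0")
  case True then show ?thesis by simp
next
  case False
  then have "real j ^ j / (exp (real j) * fact j) \<le> exp 1 / sqrt (real j)" by (intro jj_bound) simp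
  also have "\<dots> \<le> exp 1 / 1" using False by (intro divide_left_mono) auto
  finally show ?thesis by simp
qed

lemma Msg_summable:
  assumes "0 \<le> \<epsilon>" "\<epsilon> < 1"
  shows "summable (\<lambda>j. (2 * (\<epsilon> * sqrt (real j / exp 1)) ^ j) ^ 2 / fact j)"
proof (rule summable_comparison_test)
  have e2: "\<epsilon>^2 < 1" using assms by (simp add: power_less_one_iff)
  show "summable (\<lambda>j. 4 * exp 1 * (\<epsilon>^2) ^ j)"
    using e2 by (intro summable_mult summable_geometric) simp
  show "\<exists>N. \<forall>n\<ge>N. norm ((2 * (\<epsilon> * sqrt (real n / exp 1)) ^ n) ^ 2 / fact n) \<le> 4 * exp 1 * (\<epsilon>^2) ^ n"
  proof (intro exI allI impI)
    fix n :: nat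
    have "4 * (\<epsilon>^2) ^ n * (real n ^ n / (exp (real n) * fact n)) \<le> 4 * (\<epsilon>^2) ^ n * exp 1"
      by (intro mult_left_mono jj_bound0) auto
    then show "norm ((2 * (\<epsilon> * sqrt (real n / exp 1)) ^ n) ^ 2 / fact n) \<le> 4 * exp 1 * (\<epsilon>^2) ^ n"
      unfolding Msg_sq by (simp add: mult_ac)
  qed
qed

lemma Msg_tail:
  assumes "0 \<le> \<epsilon>" "\<epsilon> < 1" "l \<ge> 1"
  shows "(\<Sum>i. (2 * (\<epsilon> * sqrt (real (i + Suc l) / exp 1)) ^ (i + Suc l)) ^ 2 / fact (i + Suc l))
     \<le> 4 * exp 1 * (1 / sqrt (real l)) * (\<epsilon> ^ (2 * l + 2) / (1 - \<epsilon>^2))"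
proof -
  have e2: "\<epsilon>^2 < 1" using assms by (simp add: power_less_one_iff)
  have e20: "0 \<le> \<epsilon>^2" by simp
  have lp: "0 < sqrt (real l)" using assms by simp
  define K where "K = 4 * exp 1 / sqrt (real l) * (\<epsilon>^2) ^ Suc l"
  have sg: "summable (\<lambda>i. K * (\<epsilon>^2) ^ i)"
    using e2 by (intro summable_mult summable_geometric) simp
  have s1: "summable (\<lambda>i. (2 * (\<epsilon> * sqrt (real (i + Suc l) / exp 1)) ^ (i + Suc l)) ^ 2 / fact (i + Suc l))"
    using summable_ignore_initial_segment[OF Msg_summable[OF assms(1,2)], of "Suc l"] by simp
  have "(\<Sum>i. (2 * (\<epsilon> * sqrt (real (i + Suc l) / exp 1)) ^ (i + Suc l)) ^ 2 / fact (i + Suc l))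
      \<le> (\<Sum>i. K * (\<epsilon>^2) ^ i)"
  proof (rule suminf_le[OF _ s1 sg])
    fix i
    define n where "n = i + Suc l"
    have n1: "n \<ge> 1" unfolding n_def by simp
    have "real n ^ n / (exp (real n) * fact n) \<le> exp 1 / sqrt (real n)" by (rule jj_bound[OF n1])
    also have "\<dots> \<le> exp 1 / sqrt (real l)"
      using lp unfolding n_def by (intro divide_left_mono) auto
    finally have b: "real n ^ n / (exp (real n) * fact n) \<le> exp 1 / sqrt (real l)" .
    have "(2 * (\<epsilon> * sqrt (real n / exp 1)) ^ n) ^ 2 / fact n = 4 * (\<epsilon>^2) ^ n * (real n ^ n / (exp (real n) * fact n))"
      by (rule Msg_sq)
    also have "\<dots> \<le> 4 * (\<epsilon>^2) ^ n * (exp 1 / sqrt (real l))"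
      by (intro mult_left_mono b) auto
    also have "\<dots> = K * (\<epsilon>^2) ^ i"
      unfolding K_def n_def by (simp add: power_add mult_ac)
    finally show "(2 * (\<epsilon> * sqrt (real (i + Suc l) / exp 1)) ^ (i + Suc l)) ^ 2 / fact (i + Suc l) \<le> K * (\<epsilon>^2) ^ i"
      unfolding n_def .
  qed
  also have "\<dots> = K / (1 - \<epsilon>^2)"
    using e2 by (simp add: suminf_mult suminf_geometric summable_geometric divide_inverse)
  also have "\<dots> = 4 * exp 1 * (1 / sqrt (real l)) * (\<epsilon> ^ (2 * l + 2) / (1 - \<epsilon>^2))"
  proof -
    have "(\<epsilon>^2) ^ Suc l = \<epsilon> ^ (2 * Suc l)" by (rule power_mult[symmetric])
    also have "2 * Suc l = 2 * l + 2" by simp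
    finally have pp: "(\<epsilon>^2) ^ Suc l = \<epsilon> ^ (2 * l + 2)" .
    show ?thesis unfolding K_def pp by (simp add: divide_inverse mult_ac)
  qed
  finally show ?thesis .
qed

lemma bd_moment:
  assumes P: "prob_space M" and S: "sets M = sets borel" and m: "measure M {-\<epsilon>..\<epsilon>} = 1"
  shows "(\<integral>\<^sup>+x. ennreal (\<bar>x\<bar> ^ j) \<partial>M) \<le> ennreal (\<epsilon> ^ j)"
proof -
  interpret prob_space M by fact
  have ae: "AE x in M. x \<in> {-\<epsilon>..\<epsilon>}" by (rule AE_prob_1[OF m])
  have "AE x in M. ennreal (\<bar>x\<bar> ^ j) \<le> ennreal (\<epsilon> ^ j)"
    using ae by eventually_elim (auto intro!: ennreal_leI power_mono)
  then have "(\<integral>\<^sup>+x. ennreal (\<bar>x\<bar> ^ j) \<partial>M) \<le> (\<integral>\<^sup>+x. ennreal (\<epsilon> ^ j) \<partial>M)"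
    by (rule nn_integral_mono_AE)
  also have "\<dots> = ennreal (\<epsilon> ^ j)" by (simp add: emeasure_space_1)
  finally show ?thesis .
qed

lemma fact_ge_2pow: "n \<ge> 1 \<Longrightarrow> (fact n :: real) * 2 ^ i \<le> fact (i + n)"
proof (induction i)
  case 0 then show ?case by simp
next
  case (Suc i)
  have "(fact n :: real) * 2 ^ Suc i = 2 * (fact n * 2 ^ i)" by simp
  also have "\<dots> \<le> (real (i + n) + 1) * fact (i + n)"
    using Suc by (intro mult_mono) auto
  also have "\<dots> = fact (Suc i + n)" by simp
  finally show ?case .
qed

lemma pow_fact_le_exp: "real n ^ n / fact n \<le> exp (real n)"
proof -
  have s: "(\<lambda>k. real n ^ k / fact k) sums exp (real n)"
    using exp_converges[of "real n"] by (simp add: divide_inverse mult.commute)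
  have "(\<Sum>k\<in>{n}. real n ^ k / fact k) \<le> (\<Sum>k. real n ^ k / fact k)"
    using s by (intro sum_le_suminf) (auto simp: sums_iff)
  then show ?thesis using s by (simp add: sums_iff)
qed

lemma bd_tail:
  assumes "0 \<le> \<epsilon>" "\<epsilon> \<le> 1"
  shows "(\<Sum>i. (\<epsilon> ^ (i + Suc l)) ^ 2 / fact (i + Suc l)) \<le> 2 * (exp 1 * \<epsilon>^2 / (real l + 1)) ^ (l + 1)"
proof -
  define n where "n = Suc l"
  have n1: "n \<ge> 1" unfolding n_def by simp
  define q where "q = (\<epsilon>^2) ^ n / fact n"
  have q0: "0 \<le> q" unfolding q_def by simp
  have e21: "\<epsilon>^2 \<le> 1" using assms by (simp add: power_le_one)
  have s1: "summable (\<lambda>i. (\<epsilon> ^ (i + n)) ^ 2 / fact (i + n))"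
  proof -
    have "summable (\<lambda>k. (\<epsilon>^2) ^ k / fact k)"
      using exp_converges[of "\<epsilon>^2"] by (simp add: sums_iff divide_inverse mult.commute)
    from summable_ignore_initial_segment[OF this, of n] show ?thesis
      by (simp add: power_mult[symmetric] mult.commute)
  qed
  have s2: "summable (\<lambda>i. q * (1/2) ^ i)" by (intro summable_mult summable_geometric) simp
  have "(\<Sum>i. (\<epsilon> ^ (i + n)) ^ 2 / fact (i + n)) \<le> (\<Sum>i. q * (1/2) ^ i)"
  proof (rule suminf_le[OF _ s1 s2])
    fix i
    have pe: "(\<epsilon> ^ (i + n)) ^ 2 = (\<epsilon>^2) ^ n * (\<epsilon>^2) ^ i"
      by (simp add: power_mult_distrib power_mult[symmetric] power_add mult.commute)
    have pi: "(\<epsilon>^2) ^ i \<le> 1" using e21 by (simp add: power_le_one)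
    have f: "fact n * 2 ^ i \<le> (fact (i + n) :: real)" by (rule fact_ge_2pow[OF n1])
    have "(\<epsilon> ^ (i + n)) ^ 2 / fact (i + n) \<le> (\<epsilon>^2) ^ n / fact (i + n)"
      unfolding pe using mult_left_mono[OF pi, of "(\<epsilon>^2) ^ n"] by (intro divide_right_mono) auto
    also have "\<dots> \<le> (\<epsilon>^2) ^ n / (fact n * 2 ^ i)"
      using f by (intro divide_left_mono) (auto intro!: mult_pos_pos)
    also have "\<dots> = q * (1/2) ^ i" unfolding q_def by (simp add: power_divide)
    finally show "(\<epsilon> ^ (i + n)) ^ 2 / fact (i + n) \<le> q * (1/2) ^ i" .
  qed
  also have "(\<Sum>i. q * (1/2) ^ i) = 2 * q"
    by (simp add: suminf_mult suminf_geometric summable_geometric)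
  also have "q \<le> (exp 1 * \<epsilon>^2 / real n) ^ n"
  proof -
    have np: "0 < real n" using n1 by simp
    have a: "real n ^ n / fact n \<le> exp 1 ^ n"
      using pow_fact_le_exp[of n] by (simp add: exp_of_nat_mult[symmetric])
    have "1 / fact n \<le> exp 1 ^ n / real n ^ n"
      using a np by (simp add: field_simps)
    then have "(\<epsilon>^2) ^ n * (1 / fact n) \<le> (\<epsilon>^2) ^ n * (exp 1 ^ n / real n ^ n)"
      by (intro mult_left_mono) auto
    then show ?thesis unfolding q_def by (simp add: power_mult_distrib power_divide mult_ac)
  qed
  finally have X: "(\<Sum>i. (\<epsilon> ^ (i + n)) ^ 2 / fact (i + n)) \<le> 2 * (exp 1 * \<epsilon>^2 / real n) ^ n"
    by (simp add: mult_left_mono)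
  have rn: "real n = real l + 1" unfolding n_def by simp
  show ?thesis using X unfolding rn unfolding n_def by simp
qed

lemma e_ge: "exp (1::real) \<ge> 5/2"
  using exp_lower_Taylor_quadratic[of 1] by simp

theorem lemma8:
  "\<exists>C>0. \<forall>(\<nu>::real measure) (\<nu>'::real measure) (l::nat) (\<epsilon>::real).
     real_distribution \<nu> \<and> real_distribution \<nu>' \<and> centered \<nu> \<and> centered \<nu>' \<and>
     l \<ge> 1 \<and> (\<forall>j\<in>{1..l}. moment \<nu> j = moment \<nu>' j) \<and> 0 \<le> \<epsilon> \<and> \<epsilon> < 1 \<longrightarrow>
       (subgaussian \<nu> \<epsilon> \<and> subgaussian \<nu>' \<epsilon> \<longrightarrow>
          chi2 (gauss_conv_density \<nu>) (gauss_conv_density \<nu>')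
            \<le> ennreal (C * (1 / sqrt (real l)) * (\<epsilon> ^ (2 * l + 2) / (1 - \<epsilon>\<^sup>2)))) \<and>
       (measure \<nu> {-\<epsilon>..\<epsilon>} = 1 \<and> measure \<nu>' {-\<epsilon>..\<epsilon>} = 1 \<longrightarrow>
          chi2 (gauss_conv_density \<nu>) (gauss_conv_density \<nu>')
            \<le> ennreal (C * (exp 1 * \<epsilon>\<^sup>2 / (real l + 1)) ^ (l + 1)))"
proof (intro exI[of _ "80 * exp 1"] conjI allI impI)
  show "(0::real) < 80 * exp 1" by simp
next
  fix \<nu> \<nu>' :: "real measure" and l :: nat and \<epsilon> :: real
  assume H: "real_distribution \<nu> \<and> real_distribution \<nu>' \<and> centered \<nu> \<and> centered \<nu>' \<and>
     l \<ge> 1 \<and> (\<forall>j\<in>{1..l}. moment \<nu> j = moment \<nu>' j) \<and> 0 \<le> \<epsilon> \<and> \<epsilon> < 1"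
  then have P1: "prob_space \<nu>" and S1: "sets \<nu> = sets borel" and P2: "prob_space \<nu>'" and S2: "sets \<nu>' = sets borel"
    and c2: "centered \<nu>'" and l1: "l \<ge> 1" and eqm: "\<forall>j\<in>{1..l}. moment \<nu> j = moment \<nu>' j"
    and e0: "0 \<le> \<epsilon>" and e1: "\<epsilon> < 1"
    unfolding real_distribution_def by auto
  have e2: "\<epsilon>^2 < 1" using e0 e1 by (simp add: power_less_one_iff)
  {
    assume sg: "subgaussian \<nu> \<epsilon> \<and> subgaussian \<nu>' \<epsilon>"
    define M where "M j = 2 * (\<epsilon> * sqrt (real j / exp 1)) ^ j" for j :: nat
    have Mnn: "0 \<le> M j" for j unfolding M_def using e0 by simp
    have m1: "(\<integral>\<^sup>+x. ennreal (\<bar>x\<bar> ^ j) \<partial>\<nu>) \<le> ennreal (M j)" for j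
      unfolding M_def using sg_moment[OF P1 S1 _ e0] sg by blast
    have m2: "(\<integral>\<^sup>+x. ennreal (\<bar>x\<bar> ^ j) \<partial>\<nu>') \<le> ennreal (M j)" for j
      unfolding M_def using sg_moment[OF P2 S2 _ e0] sg by blast
    have sm: "summable (\<lambda>j. M j ^ 2 / fact j)"
      unfolding M_def by (rule Msg_summable[OF e0 e1])
    have M2: "M 2 \<le> 8/5"
    proof -
      have "M 2 = 2 * (\<epsilon>^2 * (2 / exp 1))" unfolding M_def by (simp add: power_mult_distrib)
      also have "\<dots> \<le> 2 * (1 * (2 / exp 1))"
        using e2 by (intro mult_left_mono mult_right_mono) auto
      also have "\<dots> \<le> 2 * (1 * (2 / (5/2)))"
        using e_ge by (intro mult_left_mono divide_left_mono) auto
      finally show ?thesis by simp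
    qed
    have "chi2 (gauss_conv_density \<nu>) (gauss_conv_density \<nu>')
           \<le> ennreal (20 * (\<Sum>i. M (i + Suc l) ^ 2 / fact (i + Suc l)))"
      by (rule core[OF P1 S1 P2 S2 c2 Mnn m1 m2 sm M2 eqm])
    also have "20 * (\<Sum>i. M (i + Suc l) ^ 2 / fact (i + Suc l))
        \<le> 20 * (4 * exp 1 * (1 / sqrt (real l)) * (\<epsilon> ^ (2 * l + 2) / (1 - \<epsilon>^2)))"
      unfolding M_def by (intro mult_left_mono Msg_tail[OF e0 e1 l1]) simp
    also have "\<dots> = 80 * exp 1 * (1 / sqrt (real l)) * (\<epsilon> ^ (2 * l + 2) / (1 - \<epsilon>\<^sup>2))"
      by simp
    finally show "chi2 (gauss_conv_density \<nu>) (gauss_conv_density \<nu>')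
            \<le> ennreal (80 * exp 1 * (1 / sqrt (real l)) * (\<epsilon> ^ (2 * l + 2) / (1 - \<epsilon>\<^sup>2)))"
      by (simp add: ennreal_leI)
  }
  {
    assume bd: "measure \<nu> {-\<epsilon>..\<epsilon>} = 1 \<and> measure \<nu>' {-\<epsilon>..\<epsilon>} = 1"
    define M where "M j = \<epsilon> ^ j" for j :: nat
    have Mnn: "0 \<le> M j" for j unfolding M_def using e0 by simp
    have m1: "(\<integral>\<^sup>+x. ennreal (\<bar>x\<bar> ^ j) \<partial>\<nu>) \<le> ennreal (M j)" for j
      unfolding M_def using bd_moment[OF P1 S1] bd by blast
    have m2: "(\<integral>\<^sup>+x. ennreal (\<bar>x\<bar> ^ j) \<partial>\<nu>') \<le> ennreal (M j)" for j
      unfolding M_def using bd_moment[OF P2 S2] bd by blast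
    have sm: "summable (\<lambda>j. M j ^ 2 / fact j)"
    proof -
      have "summable (\<lambda>k. (\<epsilon>^2) ^ k / fact k)"
        using exp_converges[of "\<epsilon>^2"] by (simp add: sums_iff divide_inverse mult.commute)
      then show ?thesis unfolding M_def by (simp add: power_mult[symmetric] mult.commute)
    qed
    have M2: "M 2 \<le> 8/5" unfolding M_def using e2 by simp
    have X: "0 \<le> (exp 1 * \<epsilon>\<^sup>2 / (real l + 1)) ^ (l + 1)" by simp
    have "chi2 (gauss_conv_density \<nu>) (gauss_conv_density \<nu>')
           \<le> ennreal (20 * (\<Sum>i. M (i + Suc l) ^ 2 / fact (i + Suc l)))"
      by (rule core[OF P1 S1 P2 S2 c2 Mnn m1 m2 sm M2 eqm])
    also have "20 * (\<Sum>i. M (i + Suc l) ^ 2 / fact (i + Suc l))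
        \<le> 20 * (2 * (exp 1 * \<epsilon>\<^sup>2 / (real l + 1)) ^ (l + 1))"
      unfolding M_def by (intro mult_left_mono bd_tail) (use e0 e1 in auto)
    also have "\<dots> \<le> 80 * exp 1 * (exp 1 * \<epsilon>\<^sup>2 / (real l + 1)) ^ (l + 1)"
    proof -
      have "(40::real) \<le> 80 * exp 1" using e_ge by simp
      then show ?thesis using X mult_right_mono[OF _ X, of 40 "80 * exp 1"] by simp
    qed
    finally show "chi2 (gauss_conv_density \<nu>) (gauss_conv_density \<nu>')
            \<le> ennreal (80 * exp 1 * (exp 1 * \<epsilon>\<^sup>2 / (real l + 1)) ^ (l + 1))"
      by (simp add: ennreal_leI)
  }
qed

end
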